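(* Consider the NSGA-II with population size $N\ge 4(n+1)$ optimizing \textsc{LeadingOnesTrailingZeroes} (with any way of generating offspring). If in some iteration $t$ the combined population $R_t=P_t\cup Q_t$ contains an individual $x$ of rank one (in the non-dominated sorting of $R_t$), then $P_{t+1}$ contains an individual $y$ with $f(y)=f(x)$. In particular, if $P_t$ contains an individual with objective value $(k,n-k)$ for some $k\in\{0,\dots,n\}$, then so does $P_s$ for every $s\ge t$.
   Context: Search space $\{0,1\}^n$; objective $f=(f_1,f_2):\{0,1\}^n\to\mathbb{R}^2$, both objectives maximized. $x$ strictly dominates $y$ if $f_1(x)\ge f_1(y)$, $f_2(x)\ge f_2(y)$ and at least one inequality is strict. Populations are multisets of bit strings; for a population $P$, $f(P)=\{f(x):x\in P\}$. Non-dominated sorting of a population $S$: $F_1$ is the set of individuals of $S$ not strictly dominated by any individual of $S$; inductively, $F_{k+1}$ is the set of individuals of $S\setminus(F_1\cup\dots\cup F_k)$ not strictly dominated by any individual of $S\setminus(F_1\cup\dots\cup F_k)$; the rank of $x$ in $S$ is the $k$ with $x\in F_k$. Crowding distance of the individuals of a set $S$ (computed with respect to $S$): start with $\mathrm{cDis}(x)=0$ for all $x\in S$; for each $i\in\{1,2\}$, sort $S$ in ascending $f_i$-value as $S_{i.1},\dots,S_{i.|S|}$ (ties broken arbitrarily), set $\mathrm{cDis}(S_{i.1})=\mathrm{cDis}(S_{i.|S|})=+\infty$, and for $2\le j\le |S|-1$ add $\frac{f_i(S_{i.j+1})-f_i(S_{i.j-1})}{f_i(S_{i.|S|})-f_i(S_{i.1})}$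 to $\mathrm{cDis}(S_{i.j})$ (if $f_i$ is constant on $S$, these summands are taken to be $0$). The NSGA-II with population size $N$: $P_0$ consists of $N$ independent uniformly random bit strings; in iteration $t=0,1,2,\dots$ it generates an offspring population $Q_t$ of $N$ individuals, sets $R_t=P_t\cup Q_t$ (multiset union, $2N$ individuals), computes the fronts $F_1,F_2,\dots$ of $R_t$, lets $i^*$ be minimal with $\sum_{i\le i^*}|F_i|\ge N$, computes the crowding distance of each individual of $F_i$ ($i\le i^*$) with respect to $F_i$, and sets $P_{t+1}=F_1\cup\dots\cup F_{i^*-1}\cup\tilde F_{i^*}$, where $\tilde F_{i^*}$ consists of the $N-\sum_{i<i^*}|F_i|$ individuals of $F_{i^*}$ with largest crowding distance, ties broken uniformly at random. \textsc{LeadingOnesTrailingZeroes}: $f(x)=\left(\sum_{i=1}^n\prod_{j=1}^i x_j,\ \sum_{i=1}^n\prod_{j=i}^n(1-x_j)\right)$ (number of leading ones, number of trailing zeros). Its Pareto front is $\{(k,n-k):k\in\{0,\dots,n\}\}$. *)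

theory Defs
  imports Complex_Main "HOL-Library.Multiset" "HOL-Library.Extended_Real"
begin

text \<open>Bit strings are boolean lists; position j (1-based) is x ! (j-1).\<close>

definition LO :: "bool list \<Rightarrow> nat" where
  "LO x = (\<Sum>i=1..length x. \<Prod>j=1..i. of_bool (x ! (j - 1)))"

definition TZ :: "bool list \<Rightarrow> nat" where
  "TZ x = (\<Sum>i=1..length x. \<Prod>j=i..length x. of_bool (\<not> x ! (j - 1)))"

definition lotz :: "bool list \<Rightarrow> real \<times> real" where
  "lotz x = (real (LO x), real (TZ x))"

definition sdom :: "('a \<Rightarrow> real \<times> real) \<Rightarrow> 'a \<Rightarrow> 'a \<Rightarrow> bool" where
  "sdom f x y \<longleftrightarrow> fst (f x) \<ge> fst (f y) \<and> snd (f x) \<ge> snd (f y) \<and>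
                   (fst (f x) > fst (f y) \<or> snd (f x) > snd (f y))"

text \<open>A population is a list; individuals are identified by their index, so
  that multiple copies of the same bit string are distinct individuals.\<close>

definition nondom :: "('a \<Rightarrow> real \<times> real) \<Rightarrow> 'a list \<Rightarrow> nat set \<Rightarrow> nat set" where
  "nondom f R S = {i \<in> S. \<forall>j\<in>S. \<not> sdom f (R ! j) (R ! i)}"

fun remaining :: "('a \<Rightarrow> real \<times> real) \<Rightarrow> 'a list \<Rightarrow> nat \<Rightarrow> nat set" where
  "remaining f R 0 = {..<length R}"
| "remaining f R (Suc k) = remaining f R k - nondom f R (remaining f R k)"

text \<open>front f R k is the k-th front F_k (k \<ge> 1) of R (a set of indices).\<close>
definition front :: "('a \<Rightarrow> real \<times> real) \<Rightarrow> 'a list \<Rightarrow> nat \<Rightarrow> nat set" where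
  "front f R k = nondom f R (remaining f R (k - 1))"

definition sorted_enum :: "(nat \<Rightarrow> real) \<Rightarrow> nat set \<Rightarrow> nat list \<Rightarrow> bool" where
  "sorted_enum g S s \<longleftrightarrow> distinct s \<and> set s = S \<and> sorted_wrt (\<lambda>a b. g a \<le> g b) s"

definition cterm :: "(nat \<Rightarrow> real) \<Rightarrow> nat list \<Rightarrow> nat \<Rightarrow> ereal" where
  "cterm g s j =
     (if j = 0 \<or> j = length s - 1 then \<infinity>
      else if g (s ! (length s - 1)) = g (s ! 0) then 0
      else ereal ((g (s ! (j + 1)) - g (s ! (j - 1))) / (g (s ! (length s - 1)) - g (s ! 0))))"

definition cdis :: "(nat \<Rightarrow> real) \<Rightarrow> (nat \<Rightarrow> real) \<Rightarrow> nat list \<Rightarrow> nat list \<Rightarrow> nat \<Rightarrow> ereal" where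
  "cdis g1 g2 s1 s2 i =
     (\<Sum>j<length s1. if s1 ! j = i then cterm g1 s1 j else 0) +
     (\<Sum>j<length s2. if s2 ! j = i then cterm g2 s2 j else 0)"

text \<open>nsga_select f N R P': P' is a possible outcome (for some tie-breaking) of
  selecting the next population of size N from the combined population R.\<close>
definition nsga_select :: "('a \<Rightarrow> real \<times> real) \<Rightarrow> nat \<Rightarrow> 'a list \<Rightarrow> 'a list \<Rightarrow> bool" where
  "nsga_select f N R P' \<longleftrightarrow>
     (\<exists>istar T s1 s2.
        istar \<ge> 1 \<and>
        (\<Sum>i=1..istar. card (front f R i)) \<ge> N \<and>
        (\<forall>k. 1 \<le> k \<and> k < istar \<longrightarrow> (\<Sum>i=1..k. card (front f R i)) < N) \<and>
        sorted_enum (\<lambda>i. fst (f (R ! i))) (front f R istar) s1 \<and>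
        sorted_enum (\<lambda>i. snd (f (R ! i))) (front f R istar) s2 \<and>
        T \<subseteq> front f R istar \<and>
        card T = N - (\<Sum>i\<in>{1..<istar}. card (front f R i)) \<and>
        (\<forall>a\<in>T. \<forall>b\<in>front f R istar - T.
           cdis (\<lambda>i. fst (f (R ! i))) (\<lambda>i. snd (f (R ! i))) s1 s2 a \<ge>
           cdis (\<lambda>i. fst (f (R ! i))) (\<lambda>i. snd (f (R ! i))) s1 s2 b) \<and>
        mset P' = image_mset (\<lambda>i. R ! i)
                    (mset_set ((\<Union>i\<in>{1..<istar}. front f R i) \<union> T)))"

end

theory Submission
  imports Defs
begin


lemma prod_ob: "finite A \<Longrightarrow> (\<Prod>j\<in>A. of_bool (P j)) = (of_bool (\<forall>j\<in>A. P j) :: nat)"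
  by (induction A rule: finite_induct) auto

lemma LO_card: "LO x = card {i\<in>{1..length x}. \<forall>j\<in>{1..i}. x ! (j - 1)}"
  unfolding LO_def by (simp add: prod_ob sum_of_bool_eq Int_def conj_commute)

lemma TZ_card: "TZ x = card {i\<in>{1..length x}. \<forall>j\<in>{i..length x}. \<not> x ! (j - 1)}"
  unfolding TZ_def by (simp add: prod_ob sum_of_bool_eq Int_def conj_commute)

lemma LO_le: "LO x \<le> length x"
proof -
  have "LO x \<le> card {1..length x}" unfolding LO_card by (rule card_mono) auto
  then show ?thesis by simp
qed

lemma TZ_le: "TZ x \<le> length x"
proof -
  have "TZ x \<le> card {1..length x}" unfolding TZ_card by (rule card_mono) auto
  then show ?thesis by simp
qed

lemma LO_TZ: "LO x + TZ x \<le> length x"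
proof -
  let ?A = "{i\<in>{1..length x}. \<forall>j\<in>{1..i}. x ! (j - 1)}"
  let ?B = "{i\<in>{1..length x}. \<forall>j\<in>{i..length x}. \<not> x ! (j - 1)}"
  have d: "?A \<inter> ?B = {}" by fastforce
  have "card ?A + card ?B = card (?A \<union> ?B)" using d by (simp add: card_Un_disjoint)
  also have "\<dots> \<le> card {1..length x}" by (rule card_mono) auto
  finally show ?thesis unfolding LO_card TZ_card by simp
qed



lemma se_mono: "sorted_enum g S s \<Longrightarrow> j \<le> k \<Longrightarrow> k < length s \<Longrightarrow> g (s!j) \<le> g (s!k)"
proof (cases "j = k")
  case False
  assume "sorted_enum g S s" "j \<le> k" "k < length s"
  then show ?thesis using False sorted_wrt_nth_less[of "\<lambda>a b. g a \<le> g b" s j k]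
    unfolding sorted_enum_def by auto
qed simp

lemma cterm_nonneg:
  assumes "sorted_enum g S s" "j < length s"
  shows "cterm g s j \<ge> 0"
proof -
  have "g (s!(j+1)) - g (s!(j-1)) \<ge> 0" if "j \<noteq> 0" "j \<noteq> length s - 1"
    using se_mono[OF assms(1), of "j-1" "j+1"] that assms by auto
  moreover have "g (s ! (length s - 1)) - g (s ! 0) \<ge> 0"
    using se_mono[OF assms(1), of 0 "length s - 1"] assms by auto
  ultimately show ?thesis unfolding cterm_def by auto
qed

lemma cterm_pos_imp:
  assumes "sorted_enum g S s" "j < length s" "cterm g s j > 0"
  shows "j = 0 \<or> j = length s - 1 \<or> g (s!(j-1)) < g (s!j) \<or> g (s!j) < g (s!(j+1))"
proof (rule ccontr)
  assume "\<not> ?thesis"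
  then have h: "j \<noteq> 0" "j \<noteq> length s - 1" "\<not> g (s!(j-1)) < g (s!j)" "\<not> g (s!j) < g (s!(j+1))"
    by auto
  have "g (s!(j-1)) \<le> g (s!j)" "g (s!j) \<le> g (s!(j+1))"
    using se_mono[OF assms(1), of "j-1" j] se_mono[OF assms(1), of j "j+1"] h assms(2) by auto
  then have "g (s!(j+1)) = g (s!(j-1))" using h by auto
  then have "cterm g s j = 0" using h unfolding cterm_def by auto
  then show False using assms(3) by simp
qed

lemma cterm_pos:
  assumes "sorted_enum g S s" "j < length s" "j = 0 \<or> g (s!(j-1)) < g (s!j)"
  shows "cterm g s j > 0"
proof (cases "j = 0 \<or> j = length s - 1")
  case True then show ?thesis unfolding cterm_def by auto
next
  case False
  then have lt: "g (s!(j-1)) < g (s!j)" using assms by auto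
  have a: "g (s!j) \<le> g (s!(j+1))" using se_mono[OF assms(1), of j "j+1"] False assms(2) by auto
  have b: "g (s!0) \<le> g (s!(j-1))" using se_mono[OF assms(1), of 0 "j-1"] assms(2) by auto
  have c: "g (s!j) \<le> g (s!(length s - 1))" using se_mono[OF assms(1), of j "length s - 1"] assms(2) by auto
  have "g (s ! (length s - 1)) - g (s ! 0) > 0" using lt b c by linarith
  moreover have "g (s!(j+1)) - g (s!(j-1)) > 0" using lt a by linarith
  ultimately show ?thesis using False unfolding cterm_def by auto
qed

lemma sum_index:
  assumes "distinct s" "k < length s"
  shows "(\<Sum>j<length s. if s ! j = s ! k then c j else (0::ereal)) = c k"
proof -
  have "(\<Sum>j<length s. if s ! j = s ! k then c j else (0::ereal)) = (\<Sum>j<length s. if j = k then c j else 0)"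
    using assms by (intro sum.cong) (auto simp: nth_eq_iff_index_eq)
  also have "\<dots> = c k" using assms by simp
  finally show ?thesis .
qed

lemma count_special:
  assumes se: "sorted_enum g S s" and V: "\<forall>i\<in>S. g i \<in> V" "finite V"
  shows "card {j. j < length s \<and> (j = 0 \<or> j = length s - 1 \<or> g (s!(j-1)) < g (s!j) \<or> g (s!j) < g (s!(j+1)))} \<le> 2 * card V"
proof -
  let ?L = "{j. j < length s \<and> (j = 0 \<or> g (s!(j-1)) < g (s!j))}"
  let ?R = "{j. j < length s \<and> (j = length s - 1 \<or> g (s!j) < g (s!(j+1)))}"
  have img: "(\<lambda>j. g (s!j)) ` {..<length s} \<subseteq> V" using se V unfolding sorted_enum_def by auto
  have "inj_on (\<lambda>j. g (s!j)) ?L"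
  proof (rule inj_onI)
    fix a b assume a: "a \<in> ?L" and b: "b \<in> ?L" and e: "g (s!a) = g (s!b)"
    show "a = b"
    proof (rule ccontr)
      assume "a \<noteq> b"
      then consider "a < b" | "b < a" by linarith
      then show False
      proof cases
        case 1
        then have "g (s!(b-1)) < g (s!b)" using b by auto
        moreover have "g (s!a) \<le> g (s!(b-1))" using se_mono[OF se, of a "b-1"] 1 b by auto
        ultimately show False using e by simp
      next
        case 2
        then have "g (s!(a-1)) < g (s!a)" using a by auto
        moreover have "g (s!b) \<le> g (s!(a-1))" using se_mono[OF se, of b "a-1"] 2 a by auto
        ultimately show False using e by simp
      qed
    qed
  qed
  then have cL: "card ?L \<le> card V" by (rule card_inj_on_le) (use img V in auto)
  have "inj_on (\<lambda>j. g (s!j)) ?R"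
  proof (rule inj_onI)
    fix a b assume a: "a \<in> ?R" and b: "b \<in> ?R" and e: "g (s!a) = g (s!b)"
    show "a = b"
    proof (rule ccontr)
      assume "a \<noteq> b"
      then consider "a < b" | "b < a" by linarith
      then show False
      proof cases
        case 1
        then have "g (s!a) < g (s!(a+1))" using a b by auto
        moreover have "g (s!(a+1)) \<le> g (s!b)" using se_mono[OF se, of "a+1" b] 1 b by auto
        ultimately show False using e by simp
      next
        case 2
        then have "g (s!b) < g (s!(b+1))" using a b by auto
        moreover have "g (s!(b+1)) \<le> g (s!a)" using se_mono[OF se, of "b+1" a] 2 a by auto
        ultimately show False using e by simp
      qed
    qed
  qed
  then have cR: "card ?R \<le> card V" by (rule card_inj_on_le) (use img V in auto)
  have "{j. j < length s \<and> (j = 0 \<or> j = length s - 1 \<or> g (s!(j-1)) < g (s!j) \<or> g (s!j) < g (s!(j+1)))} = ?L \<union> ?R"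
    by auto
  moreover have "card (?L \<union> ?R) \<le> card ?L + card ?R" by (rule card_Un_le)
  ultimately show ?thesis using cL cR by simp
qed



lemma remaining_sub: "remaining f R k \<subseteq> {..<length R}"
  by (induction k) auto

lemma front_sub: "front f R k \<subseteq> {..<length R}"
  unfolding front_def nondom_def using remaining_sub by blast

lemma front1: "front f R 1 = {i\<in>{..<length R}. \<forall>j\<in>{..<length R}. \<not> sdom f (R ! j) (R ! i)}"
  unfolding front_def nondom_def by simp

lemma cdis_at:
  assumes "distinct s1" "distinct s2" "set s1 = set s2" "j < length s1"
  obtains k where "k < length s2" "s2 ! k = s1 ! j"
    "cdis g1 g2 s1 s2 (s1 ! j) = cterm g1 s1 j + cterm g2 s2 k"
proof -
  have "s1 ! j \<in> set s2" using assms by (metis nth_mem)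
  then obtain k where k: "k < length s2" "s2 ! k = s1 ! j" by (metis in_set_conv_nth)
  have "cdis g1 g2 s1 s2 (s1 ! j) = cterm g1 s1 j + cterm g2 s2 k"
    unfolding cdis_def using sum_index[OF assms(1) assms(4), of "cterm g1 s1"]
      sum_index[OF assms(2) k(1), of "cterm g2 s2"] k(2) by simp
  then show ?thesis using that k by blast
qed

lemma part1:
  fixes R P' :: "bool list list"
  assumes N: "N \<ge> 4 * (n + 1)"
    and lens: "\<forall>x\<in>set R. length x = n"
    and sel: "nsga_select lotz N R P'"
    and i: "i \<in> front lotz R 1"
  shows "\<exists>y\<in>set P'. lotz y = lotz (R ! i)"
proof -
  obtain istar T s1 s2 where
    ist: "istar \<ge> 1" and
    s1: "sorted_enum (\<lambda>i. fst (lotz (R ! i))) (front lotz R istar) s1" and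
    s2: "sorted_enum (\<lambda>i. snd (lotz (R ! i))) (front lotz R istar) s2" and
    TF: "T \<subseteq> front lotz R istar" and
    cT: "card T = N - (\<Sum>i\<in>{1..<istar}. card (front lotz R i))" and
    cd: "\<forall>a\<in>T. \<forall>b\<in>front lotz R istar - T.
           cdis (\<lambda>i. fst (lotz (R ! i))) (\<lambda>i. snd (lotz (R ! i))) s1 s2 a \<ge>
           cdis (\<lambda>i. fst (lotz (R ! i))) (\<lambda>i. snd (lotz (R ! i))) s1 s2 b" and
    ms: "mset P' = image_mset (\<lambda>i. R ! i)
                    (mset_set ((\<Union>i\<in>{1..<istar}. front lotz R i) \<union> T))"
    using sel unfolding nsga_select_def by blast
  define Sel where "Sel = (\<Union>i\<in>{1..<istar}. front lotz R i) \<union> T"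
  have SelS: "Sel \<subseteq> {..<length R}" unfolding Sel_def using front_sub TF by blast
  then have finSel: "finite Sel" using finite_subset by blast
  have setP: "set P' = (\<lambda>i. R ! i) ` Sel"
  proof -
    have "set P' = set_mset (mset P')" by simp
    also have "\<dots> = (\<lambda>i. R ! i) ` Sel" using ms finSel unfolding Sel_def[symmetric] by simp
    finally show ?thesis .
  qed
  show ?thesis
  proof (cases "istar = 1")
    case False
    then have "i \<in> Sel" using i ist unfolding Sel_def by auto
    then show ?thesis using setP by auto
  next
    case True
    define F where "F = front lotz R 1"
    define g1 where "g1 = (\<lambda>i. fst (lotz (R ! i)))"
    define g2 where "g2 = (\<lambda>i. snd (lotz (R ! i)))"
    define cd where "cd = cdis g1 g2 s1 s2"
    have s1': "sorted_enum g1 F s1" and s2': "sorted_enum g2 F s2"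
      using s1 s2 True unfolding F_def g1_def g2_def by auto
    have TF': "T \<subseteq> F" and cT': "card T = N" using TF cT True unfolding F_def by auto
    have cd': "\<forall>a\<in>T. \<forall>b\<in>F - T. cd a \<ge> cd b"
      using cd True unfolding F_def cd_def g1_def g2_def by auto
    have FS: "F \<subseteq> {..<length R}" unfolding F_def using front_sub by blast
    then have finF: "finite F" using finite_subset by blast
    have d1: "distinct s1" "set s1 = F" and d2: "distinct s2" "set s2 = F"
      using s1' s2' unfolding sorted_enum_def by auto
    define V where "V = real ` {0..n}"
    have finV: "finite V" and cV: "card V = n + 1"
      unfolding V_def by (auto simp: card_image inj_on_def)
    have g1V: "\<forall>a\<in>F. g1 a \<in> V"
    proof
      fix a assume "a \<in> F"
      then have "R ! a \<in> set R" using FS by auto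
      then have "LO (R ! a) \<le> n" using lens LO_le by metis
      then show "g1 a \<in> V" unfolding g1_def V_def lotz_def by auto
    qed
    have g2V: "\<forall>a\<in>F. g2 a \<in> V"
    proof
      fix a assume "a \<in> F"
      then have "R ! a \<in> set R" using FS by auto
      then have "TZ (R ! a) \<le> n" using lens TZ_le by metis
      then show "g2 a \<in> V" unfolding g2_def V_def lotz_def by auto
    qed
    define J1 where "J1 = {j. j < length s1 \<and> (j = 0 \<or> j = length s1 - 1 \<or> g1 (s1!(j-1)) < g1 (s1!j) \<or> g1 (s1!j) < g1 (s1!(j+1)))}"
    define J2 where "J2 = {j. j < length s2 \<and> (j = 0 \<or> j = length s2 - 1 \<or> g2 (s2!(j-1)) < g2 (s2!j) \<or> g2 (s2!j) < g2 (s2!(j+1)))}"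
    have cJ1: "card J1 \<le> 2 * (n + 1)" using count_special[OF s1' g1V finV] cV unfolding J1_def by simp
    have cJ2: "card J2 \<le> 2 * (n + 1)" using count_special[OF s2' g2V finV] cV unfolding J2_def by simp
    define Pos where "Pos = {a\<in>F. cd a > 0}"
    have PosSub: "Pos \<subseteq> (\<lambda>j. s1 ! j) ` J1 \<union> (\<lambda>j. s2 ! j) ` J2"
    proof
      fix a assume a: "a \<in> Pos"
      then have "a \<in> set s1" using d1 unfolding Pos_def by auto
      then obtain j where j: "j < length s1" "s1 ! j = a" by (metis in_set_conv_nth)
      obtain k where k: "k < length s2" "s2 ! k = s1 ! j"
        "cd (s1 ! j) = cterm g1 s1 j + cterm g2 s2 k"
        using cdis_at[OF d1(1) d2(1) _ j(1)] d1 d2 unfolding cd_def by metis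
      have n1: "cterm g1 s1 j \<ge> 0" using cterm_nonneg[OF s1' j(1)] .
      have n2: "cterm g2 s2 k \<ge> 0" using cterm_nonneg[OF s2' k(1)] .
      have "cd a > 0" using a unfolding Pos_def by auto
      then have "cterm g1 s1 j > 0 \<or> cterm g2 s2 k > 0"
        using k(3) j(2) n1 n2 by (metis add.right_neutral order_less_le)
      then show "a \<in> (\<lambda>j. s1 ! j) ` J1 \<union> (\<lambda>j. s2 ! j) ` J2"
      proof
        assume "cterm g1 s1 j > 0"
        then have "j \<in> J1" using cterm_pos_imp[OF s1' j(1)] j(1) unfolding J1_def by auto
        then show ?thesis using j(2) by auto
      next
        assume "cterm g2 s2 k > 0"
        then have "k \<in> J2" using cterm_pos_imp[OF s2' k(1)] k(1) unfolding J2_def by auto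
        then show ?thesis using k(2) j(2) by auto
      qed
    qed
    have finJ: "finite J1" "finite J2" unfolding J1_def J2_def by auto
    have cPos: "card Pos \<le> N"
    proof -
      have "card Pos \<le> card ((\<lambda>j. s1 ! j) ` J1 \<union> (\<lambda>j. s2 ! j) ` J2)"
        using PosSub finJ by (intro card_mono) auto
      also have "\<dots> \<le> card ((\<lambda>j. s1 ! j) ` J1) + card ((\<lambda>j. s2 ! j) ` J2)" by (rule card_Un_le)
      also have "\<dots> \<le> card J1 + card J2" by (intro add_mono card_image_le finJ)
      also have "\<dots> \<le> N" using cJ1 cJ2 N by linarith
      finally show ?thesis .
    qed
    have iF: "i \<in> set s1" using i d1 unfolding F_def by auto
    define P where "P = (\<lambda>j. j < length s1 \<and> g1 (s1 ! j) = g1 i)"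
    have exP: "\<exists>j. P j" using iF unfolding P_def by (metis in_set_conv_nth)
    define j0 where "j0 = (LEAST j. P j)"
    have Pj0: "P j0" unfolding j0_def using exP by (metis LeastI)
    have j0l: "j0 < length s1" and gj0: "g1 (s1 ! j0) = g1 i" using Pj0 unfolding P_def by auto
    have "j0 = 0 \<or> g1 (s1!(j0-1)) < g1 (s1!j0)"
    proof (cases "j0 = 0")
      case False
      then have "\<not> P (j0 - 1)" unfolding j0_def by (metis diff_less not_less_Least zero_less_one neq0_conv)
      then have "g1 (s1!(j0-1)) \<noteq> g1 (s1!j0)" using gj0 j0l unfolding P_def by auto
      moreover have "g1 (s1!(j0-1)) \<le> g1 (s1!j0)" using se_mono[OF s1', of "j0-1" j0] j0l by auto
      ultimately show ?thesis by auto
    qed simp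
    then have ct: "cterm g1 s1 j0 > 0" using cterm_pos[OF s1' j0l] by blast
    define a where "a = s1 ! j0"
    have aF: "a \<in> F" using j0l d1 unfolding a_def by auto
    obtain k where k: "k < length s2" "cd a = cterm g1 s1 j0 + cterm g2 s2 k"
      using cdis_at[OF d1(1) d2(1) _ j0l] d1 d2 unfolding cd_def a_def by metis
    have "cterm g2 s2 k \<ge> 0" using cterm_nonneg[OF s2' k(1)] .
    then have cda: "cd a > 0" using ct k(2) by (simp add: add_pos_nonneg)
    have aT: "a \<in> T"
    proof (rule ccontr)
      assume naT: "a \<notin> T"
      have "T \<subseteq> Pos"
      proof
        fix b assume "b \<in> T"
        then have "cd b \<ge> cd a" using cd' aF naT by auto
        then show "b \<in> Pos" using cda TF' \<open>b \<in> T\<close> unfolding Pos_def by auto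
      qed
      moreover have "a \<in> Pos" using aF cda unfolding Pos_def by auto
      ultimately have "insert a T \<subseteq> Pos" by auto
      moreover have "finite Pos" using finF unfolding Pos_def by auto
      ultimately have "card (insert a T) \<le> card Pos" by (rule card_mono[rotated])
      moreover have "card (insert a T) = N + 1" using naT cT' TF' finF
        by (simp add: finite_subset)
      ultimately show False using cPos by linarith
    qed
    then have "R ! a \<in> set P'" using setP unfolding Sel_def by auto
    moreover have "lotz (R ! a) = lotz (R ! i)"
    proof -
      have iF': "i \<in> F" and iFl: "i < length R" using i FS unfolding F_def by auto
      have al: "a < length R" using aF FS by auto
      have nd1: "\<not> sdom lotz (R ! a) (R ! i)" using i al unfolding front1 by auto
      have nd2: "\<not> sdom lotz (R ! i) (R ! a)" using aF iFl unfolding F_def front1 by auto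
      have "fst (lotz (R ! a)) = fst (lotz (R ! i))" using gj0 unfolding a_def g1_def by simp
      then show ?thesis using nd1 nd2 unfolding sdom_def by (metis linorder_neqE prod_eq_iff order_refl less_imp_le)
    qed
    ultimately show ?thesis by blast
  qed
qed

lemma setP_sub:
  assumes "nsga_select f N R P'"
  shows "set P' \<subseteq> set R"
proof -
  obtain istar T where TF: "T \<subseteq> front f R istar" and
    ms: "mset P' = image_mset (\<lambda>i. R ! i)
                    (mset_set ((\<Union>i\<in>{1..<istar}. front f R i) \<union> T))"
    using assms unfolding nsga_select_def by blast
  define Sel where "Sel = (\<Union>i\<in>{1..<istar}. front f R i) \<union> T"
  have SelS: "Sel \<subseteq> {..<length R}" unfolding Sel_def using front_sub TF by blast
  then have "finite Sel" using finite_subset by blast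
  then have "set P' = (\<lambda>i. R ! i) ` Sel" using ms
    by (metis Sel_def finite_set_mset_mset_set set_image_mset set_mset_mset)
  then show ?thesis using SelS by auto
qed

theorem lemma7:
  fixes n N :: nat and P Q :: "nat \<Rightarrow> bool list list"
  assumes N: "N \<ge> 4 * (n + 1)"
    and P0: "length (P 0) = N" "\<forall>x\<in>set (P 0). length x = n"
    and Qt: "\<And>t. length (Q t) = N \<and> (\<forall>x\<in>set (Q t). length x = n)"
    and step: "\<And>t. nsga_select lotz N (P t @ Q t) (P (Suc t))"
  shows "(\<forall>t i. i \<in> front lotz (P t @ Q t) 1 \<longrightarrow>
              (\<exists>y\<in>set (P (Suc t)). lotz y = lotz ((P t @ Q t) ! i)))
       \<and> (\<forall>t k. k \<le> n \<and> (\<exists>x\<in>set (P t). lotz x = (real k, real (n - k))) \<longrightarrow>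
              (\<forall>s\<ge>t. \<exists>y\<in>set (P s). lotz y = (real k, real (n - k))))"
proof -
  have lenP: "\<forall>x\<in>set (P t). length x = n" for t
  proof (induction t)
    case 0 then show ?case using P0 by simp
  next
    case (Suc t)
    then show ?case using setP_sub[OF step[of t]] Qt[of t] by auto
  qed
  have lenR: "\<forall>x\<in>set (P t @ Q t). length x = n" for t using lenP Qt by auto
  have A: "\<forall>t i. i \<in> front lotz (P t @ Q t) 1 \<longrightarrow>
              (\<exists>y\<in>set (P (Suc t)). lotz y = lotz ((P t @ Q t) ! i))"
    using part1[OF N lenR step] by blast
  have keep: "\<exists>y\<in>set (P (Suc t)). lotz y = (real k, real (n - k))"
    if k: "k \<le> n" and x: "x \<in> set (P t)" "lotz x = (real k, real (n - k))" for t k x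
  proof -
    let ?R = "P t @ Q t"
    obtain i where i: "i < length ?R" "?R ! i = x" using x(1) by (metis in_set_conv_nth in_set_conv_decomp nth_append_left length_append trans_less_add1 in_set_conv_nth)
    have "i \<in> front lotz ?R 1"
      unfolding front1
    proof (intro CollectI conjI ballI)
      show "i \<in> {..<length ?R}" using i by simp
      fix j assume j: "j \<in> {..<length ?R}"
      then have "?R ! j \<in> set ?R" by (metis lessThan_iff nth_mem)
      then have "LO (?R ! j) + TZ (?R ! j) \<le> n" using lenR[of t] LO_TZ by metis
      then have "real (LO (?R ! j)) + real (TZ (?R ! j)) \<le> real n" by linarith
      moreover have "real (n - k) = real n - real k" using k by simp
      ultimately show "\<not> sdom lotz (?R ! j) (?R ! i)"
        using i(2) x(2) unfolding sdom_def lotz_def by auto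
    qed
    then show ?thesis using A i(2) x(2) by metis
  qed
  have B: "\<forall>t k. k \<le> n \<and> (\<exists>x\<in>set (P t). lotz x = (real k, real (n - k))) \<longrightarrow>
              (\<forall>s\<ge>t. \<exists>y\<in>set (P s). lotz y = (real k, real (n - k)))"
  proof (intro allI impI)
    fix t k s assume h: "k \<le> n \<and> (\<exists>x\<in>set (P t). lotz x = (real k, real (n - k)))" and st: "t \<le> s"
    show "\<exists>y\<in>set (P s). lotz y = (real k, real (n - k))"
      using st
    proof (induction s rule: dec_induct)
      case base then show ?case using h by blast
    next
      case (step s) then show ?case using keep h by blast
    qed
  qed
  show ?thesis using A B by blast
qed

end
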